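(* Let $d\ge2$, let $\{\mathbb{P}^u\}$ satisfy (P1), (P2), (D), (S1), (S2) (see context), fix $u\in(a,b)$, $\eta=\eta(u)$, $\Delta_S=\Delta_S(u)$. For $\alpha\in(0,1)$ and $\omega\in\Omega$ define $$R_{\mathrm{den}}(\omega,\alpha)=\inf\Big\{R_0\ge1:\ \text{for all }R\ge R_0\text{ and }x\in\mathcal S_\infty\cap B(0,r_{\alpha,R}),\ (1-\alpha)\eta\le\tfrac{|\mathcal S_\infty\cap B(x,R)|}{|B(x,R)|}\le(1+\alpha)\eta\Big\}$$ ($\inf\emptyset=\infty$). Then for every $n\in\mathbb{Z}_+$, $\mathbb{P}^u[R_{\mathrm{den}}(\cdot,\alpha)\ge n]\le C(\alpha)e^{-c(\alpha)(\log n)^{1+\Delta_S}}$ for constants $C(\alpha),c(\alpha)>0$. In particular $R_{\mathrm{den}}(\cdot,\alpha)$ is $\mathbb{P}^u$-a.s. finite and for all $R\ge R_{\mathrm{den}}(\omega,\alpha)$ and all $x\in\mathcal S_\infty\cap B(0,r_{\alpha,R})$, $(1-\alpha)\eta\le|\mathcal S_\infty\cap B(x,R)|/|B(x,R)|\le(1+\alpha)\eta$.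
   Context: Setting: $\Omega=\{0,1\}^{\mathbb{Z}^d}$ with product $\sigma$-algebra $\mathcal F$, shifts $(\Psi_x\omega)(y)=\omega(y+x)$; $\mathcal S=\{x:\omega(x)=1\}$ as a nearest-neighbour subgraph of $\mathbb{Z}^d$; $\mathcal S_r$ = vertices of $\mathcal S$ in components of $\ell^1$-diameter $\ge r$; $\mathcal S_\infty$ = vertices in infinite components; $B(x,r)$ closed $\ell^\infty$-ball in $\mathbb{Z}^d$. Increasing/decreasing events w.r.t. coordinatewise order. Probability measures $\mathbb{P}^u$, $u\in(a,b)$, $0<a<b<\infty$, satisfy: (P1) shifts are measure-preserving and ergodic; (P2) $\mathbb{P}^u[G]\le\mathbb{P}^{u'}[G]$ for increasing $G$, $u<u'$; (D) there are $\beta,\gamma,\zeta,C,c>0$ such that for $L,s\in\mathbb{Z}_+$, $|x_1-x_2|_\infty=sL$, $a<u<u'<b$, and events $A_i$ (increasing) resp. $B_i$ (decreasing) depending only on $\{\omega(y):y\in B(x_i,L)\}$: $\mathbb{P}^u[A_1\cap A_2]\le\mathbb{P}^{u'}[A_1]\mathbb{P}^{u'}[A_2]+\varepsilon$, $\mathbb{P}^{u'}[B_1\cap B_2]\le\mathbb{P}^{u}[B_1]\mathbb{P}^{u}[B_2]+\varepsilon$ with $\varepsilon=C\exp(-c\min\{(u'-u)^\beta s^\gamma,e^{(\log L)^\zeta}\})$; (S1) there is $f_S$ such that for each $u$ there are $\Delta_S(u)>0,R_S(u)$ with $f_S(u,R)\ge(\log R)^{1+\Delta_S}$ for $R\ge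 R_S$, and for all $R\ge1$, $\mathbb{P}^u[\mathcal S_R\cap B(0,R)\ne\emptyset]\ge1-e^{-f_S(u,R)}$ and $\mathbb{P}^u[\text{all }x,y\in\mathcal S_{R/10}\cap B(0,R)\text{ connected in }\mathcal S\cap B(0,2R)]\ge1-e^{-f_S(u,R)}$; (S2) $\eta(u)=\mathbb{P}^u[0\in\mathcal S_\infty]$ is positive and continuous. Heat kernel facts (known): for $\omega$ with $\mathcal S_\infty$ nonempty and connected, $P^\omega_x$ is the law of the continuous-time constant-speed simple random walk $(X_t)$ on $\mathcal S_\infty$ (unit-rate exponential holding times, jumps to a uniformly chosen neighbour in $\mathcal S_\infty$), $\mu_y$ the degree of $y$ in $\mathcal S_\infty$, $q^\omega_t(x,y)=P^\omega_x[X_t=y]/\mu_y$. There are constants $c_{hk1},\dots,c_{hk6}>0$ and random variables $\mathcal T(x,\omega)$ such that for $\mathbb{P}^u$-a.e. $\omega$ and $x\in\mathcal S_\infty$, $\mathcal T(x,\omega)<\infty$ and $c_{hk1}t^{-d/2}e^{-c_{hk2}|x-y|_1^2/t}\le q^\omega_t(x,y)\le c_{hk3}t^{-d/2}e^{-c_{hk4}|x-y|_1^2/t}$ for $y\in\mathcal S_\infty$, $t\ge\mathcal T(x,\omega)\vee|x-y|_1^{3/2}$, and $\mathbb{P}^u[\mathcal T(z,\cdot)\ge r]\le c_{hk5}e^{-c_{hk6}(\log r)^{1+\Delta_S}}$ for all $z$, $r\ge1$. Scale: let $\kappa_{d2}(\alpha)>0$ be increasing in $\alpha\in(0,1)$ such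 that for some $\kappa_{d1}(\alpha)$, $\mathbb{P}^u[|\mathcal S_\infty\cap B(0,R)|/|B(0,R)|\notin[(1-\alpha)\eta,(1+\alpha)\eta]\mid0\in\mathcal S_\infty]\le\kappa_{d1}(\alpha)e^{-\kappa_{d2}(\alpha)(\log R)^{1+\Delta_S}}$ for all $R\ge1$. Define $\kappa_{\mathrm{reg}}(\alpha)=\frac{1}{2d}(\kappa_{d2}(\alpha)\wedge c_{hk6})$ and $r_{\alpha,R}=\exp(\kappa_{\mathrm{reg}}(\alpha)(\log R)^{1+\Delta_S})$. *)

theory Defs
  imports "HOL-Probability.Probability"
begin

text \<open>Points of the lattice Z^d are functions from a finite index type 'd to int;
  configurations (elements of Omega = {0,1}^(Z^d)) are predicates on points.\<close>

type_synonym 'd pt = "'d \<Rightarrow> int"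
type_synonym 'd config = "'d pt \<Rightarrow> bool"

definition ptadd :: "'d pt \<Rightarrow> 'd pt \<Rightarrow> 'd pt" where
  "ptadd x y = (\<lambda>i. x i + y i)"

definition origin :: "'d pt" where "origin = (\<lambda>i. 0)"

definition l1dist :: "'d::finite pt \<Rightarrow> 'd pt \<Rightarrow> int" where
  "l1dist x y = (\<Sum>i\<in>UNIV. \<bar>x i - y i\<bar>)"

definition linfdist :: "'d::finite pt \<Rightarrow> 'd pt \<Rightarrow> int" where
  "linfdist x y = Max (range (\<lambda>i. \<bar>x i - y i\<bar>))"

definition lball :: "'d pt \<Rightarrow> real \<Rightarrow> 'd pt set" where
  "lball x R = {y. \<forall>i. real_of_int \<bar>y i - x i\<bar> \<le> R}"

definition shift :: "'d pt \<Rightarrow> 'd config \<Rightarrow> 'd config" where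
  "shift x \<omega> = (\<lambda>y. \<omega> (ptadd y x))"

definition Omega_measure :: "'d config measure" where
  "Omega_measure = PiM UNIV (\<lambda>_. count_space UNIV)"

definition adj :: "'d::finite pt \<Rightarrow> 'd pt \<Rightarrow> bool" where
  "adj x y \<longleftrightarrow> l1dist x y = 1"

inductive conn_in :: "'d::finite pt set \<Rightarrow> 'd pt \<Rightarrow> 'd pt \<Rightarrow> bool" for A where
  refl: "x \<in> A \<Longrightarrow> conn_in A x x"
| step: "conn_in A x y \<Longrightarrow> adj y z \<Longrightarrow> z \<in> A \<Longrightarrow> conn_in A x z"

definition Sset :: "'d config \<Rightarrow> 'd pt set" where
  "Sset \<omega> = {x. \<omega> x}"

definition comp :: "'d::finite config \<Rightarrow> 'd pt \<Rightarrow> 'd pt set" where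
  "comp \<omega> x = {y. conn_in (Sset \<omega>) x y}"

definition diam1 :: "'d::finite pt set \<Rightarrow> ereal" where
  "diam1 C = Sup {ereal (real_of_int (l1dist x y)) | x y. x \<in> C \<and> y \<in> C}"

definition Sr :: "'d::finite config \<Rightarrow> real \<Rightarrow> 'd pt set" where
  "Sr \<omega> r = {x \<in> Sset \<omega>. diam1 (comp \<omega> x) \<ge> ereal r}"

definition Sinf :: "'d::finite config \<Rightarrow> 'd pt set" where
  "Sinf \<omega> = {x \<in> Sset \<omega>. infinite (comp \<omega> x)}"

definition increasing_event :: "'d config set \<Rightarrow> bool" where
  "increasing_event G \<longleftrightarrow> (\<forall>\<omega>\<in>G. \<forall>\<omega>'. (\<forall>x. \<omega> x \<longrightarrow> \<omega>' x) \<longrightarrow> \<omega>' \<in> G)"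

definition decreasing_event :: "'d config set \<Rightarrow> bool" where
  "decreasing_event G \<longleftrightarrow> (\<forall>\<omega>\<in>G. \<forall>\<omega>'. (\<forall>x. \<omega>' x \<longrightarrow> \<omega> x) \<longrightarrow> \<omega>' \<in> G)"

definition depends_only_on :: "'d config set \<Rightarrow> 'd pt set \<Rightarrow> bool" where
  "depends_only_on G K \<longleftrightarrow>
     (\<forall>\<omega> \<omega>'. (\<forall>y\<in>K. \<omega> y = \<omega>' y) \<longrightarrow> (\<omega> \<in> G \<longleftrightarrow> \<omega>' \<in> G))"

definition shift_invariant_ergodic :: "'d config measure \<Rightarrow> bool" where
  "shift_invariant_ergodic M \<longleftrightarrow>
     (\<forall>x. shift x \<in> measurable M M \<and> distr M M (shift x) = M) \<and>
     (\<forall>A\<in>sets M. (\<forall>x. shift x -` A \<inter> space M = A) \<longrightarrow>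
        measure M A = 0 \<or> measure M A = 1)"

definition cond_P2 :: "real \<Rightarrow> real \<Rightarrow> (real \<Rightarrow> 'd config measure) \<Rightarrow> bool" where
  "cond_P2 a b P \<longleftrightarrow>
     (\<forall>u u' G. a < u \<and> u < u' \<and> u' < b \<and> G \<in> sets Omega_measure \<and> increasing_event G
        \<longrightarrow> measure (P u) G \<le> measure (P u') G)"

definition cond_D :: "real \<Rightarrow> real \<Rightarrow> (real \<Rightarrow> ('d::finite) config measure) \<Rightarrow> bool" where
  "cond_D a b P \<longleftrightarrow>
     (\<exists>\<beta> \<gamma> \<zeta> C c. \<beta> > 0 \<and> \<gamma> > 0 \<and> \<zeta> > 0 \<and> C > 0 \<and> c > 0 \<and>
       (\<forall>(L::nat) (s::nat) (x1::'d pt) x2 u u'.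
          L \<ge> 1 \<and> linfdist x1 x2 = int (s * L) \<and> a < u \<and> u < u' \<and> u' < b \<longrightarrow>
          (let \<epsilon> = C * exp (- c * min ((u' - u) powr \<beta> * real s powr \<gamma>)
                                       (exp (ln (real L) powr \<zeta>)))
           in (\<forall>A1 A2. A1 \<in> sets Omega_measure \<and> A2 \<in> sets Omega_measure \<and>
                  increasing_event A1 \<and> increasing_event A2 \<and>
                  depends_only_on A1 (lball x1 (real L)) \<and> depends_only_on A2 (lball x2 (real L))
                  \<longrightarrow> measure (P u) (A1 \<inter> A2) \<le> measure (P u') A1 * measure (P u') A2 + \<epsilon>) \<and>
              (\<forall>B1 B2. B1 \<in> sets Omega_measure \<and> B2 \<in> sets Omega_measure \<and>
                  decreasing_event B1 \<and> decreasing_event B2 \<and>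
                  depends_only_on B1 (lball x1 (real L)) \<and> depends_only_on B2 (lball x2 (real L))
                  \<longrightarrow> measure (P u') (B1 \<inter> B2) \<le> measure (P u) B1 * measure (P u) B2 + \<epsilon>))))"

definition cond_S1 :: "real \<Rightarrow> real \<Rightarrow> (real \<Rightarrow> ('d::finite) config measure)
     \<Rightarrow> (real \<Rightarrow> real \<Rightarrow> real) \<Rightarrow> (real \<Rightarrow> real) \<Rightarrow> (real \<Rightarrow> real) \<Rightarrow> bool" where
  "cond_S1 a b P fS DeltaS RS \<longleftrightarrow>
     (\<forall>u. a < u \<and> u < b \<longrightarrow>
        DeltaS u > 0 \<and>
        (\<forall>R. R \<ge> RS u \<longrightarrow> fS u R \<ge> ln R powr (1 + DeltaS u)) \<and>
        (\<forall>R\<ge>1.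
           measure (P u) {\<omega> \<in> space (P u). Sr \<omega> R \<inter> lball origin R \<noteq> {}}
              \<ge> 1 - exp (- fS u R) \<and>
           measure (P u) {\<omega> \<in> space (P u). \<forall>x\<in>Sr \<omega> (R/10) \<inter> lball origin R.
                \<forall>y\<in>Sr \<omega> (R/10) \<inter> lball origin R. conn_in (Sset \<omega> \<inter> lball origin (2*R)) x y}
              \<ge> 1 - exp (- fS u R)))"

definition eta :: "(real \<Rightarrow> ('d::finite) config measure) \<Rightarrow> real \<Rightarrow> real" where
  "eta P u = measure (P u) {\<omega> \<in> space (P u). origin \<in> Sinf \<omega>}"

definition dens :: "('d::finite) config \<Rightarrow> 'd pt \<Rightarrow> real \<Rightarrow> real" where
  "dens \<omega> x R = real (card (Sinf \<omega> \<inter> lball x R)) / real (card (lball x R))"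

definition kappa_reg :: "(real \<Rightarrow> real) \<Rightarrow> real \<Rightarrow> nat \<Rightarrow> real \<Rightarrow> real" where
  "kappa_reg kd2 chk6 d \<alpha> = (1 / (2 * real d)) * min (kd2 \<alpha>) chk6"

definition r_scale :: "(real \<Rightarrow> real) \<Rightarrow> real \<Rightarrow> nat \<Rightarrow> real \<Rightarrow> real \<Rightarrow> real \<Rightarrow> real" where
  "r_scale kd2 chk6 d DS \<alpha> R = exp (kappa_reg kd2 chk6 d \<alpha> * ln R powr (1 + DS))"

text \<open>The good-density property for a threshold R0, and R_den as an infimum in ereal
  (Inf of the empty set is infinity).\<close>
definition dens_good :: "(real \<Rightarrow> real) \<Rightarrow> real \<Rightarrow> real \<Rightarrow> real \<Rightarrow> ('d::finite) config
     \<Rightarrow> real \<Rightarrow> real \<Rightarrow> bool" where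
  "dens_good kd2 chk6 DS et \<omega> \<alpha> R \<longleftrightarrow>
     (\<forall>x \<in> Sinf \<omega> \<inter> lball origin (r_scale kd2 chk6 CARD('d) DS \<alpha> R).
        (1 - \<alpha>) * et \<le> dens \<omega> x R \<and> dens \<omega> x R \<le> (1 + \<alpha>) * et)"

definition R_den :: "(real \<Rightarrow> real) \<Rightarrow> real \<Rightarrow> real \<Rightarrow> real \<Rightarrow> ('d::finite) config
     \<Rightarrow> real \<Rightarrow> ereal" where
  "R_den kd2 chk6 DS et \<omega> \<alpha> =
     Inf (ereal ` {R0. R0 \<ge> 1 \<and> (\<forall>R\<ge>R0. dens_good kd2 chk6 DS et \<omega> \<alpha> R)})"

end

theory Submission
  imports Defs
begin

lemma space_Omega: "space Omega_measure = UNIV"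
  by (simp add: Omega_measure_def space_PiM PiE_UNIV_domain)

lemma lball_floor: "lball x R = lball x (real_of_int \<lfloor>R\<rfloor>)"
  unfolding lball_def
proof (intro Collect_cong allI iff_allI)
  fix y :: "'a pt" and i
  show "real_of_int \<bar>y i - x i\<bar> \<le> R \<longleftrightarrow> real_of_int \<bar>y i - x i\<bar> \<le> real_of_int \<lfloor>R\<rfloor>"
    by (metis floor_mono floor_of_int le_floor_iff of_int_le_iff order_trans)
qed

lemma lball_PiE: "lball x R = PiE UNIV (\<lambda>i. {x i - \<lfloor>R\<rfloor> .. x i + \<lfloor>R\<rfloor>})"
proof -
  have "lball x R = lball x (real_of_int \<lfloor>R\<rfloor>)" by (rule lball_floor)
  also have "\<dots> = PiE UNIV (\<lambda>i. {x i - \<lfloor>R\<rfloor> .. x i + \<lfloor>R\<rfloor>})"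
    unfolding lball_def PiE_UNIV_domain Pi_def of_int_le_iff
    by (auto simp: abs_le_iff; metis add.commute diff_le_eq le_diff_eq)
  finally show ?thesis .
qed

lemma finite_lball: "finite (lball (x::'d::finite pt) R)"
  unfolding lball_PiE by (rule finite_PiE) auto

lemma card_lball: "R \<ge> 0 \<Longrightarrow> card (lball (x::'d::finite pt) R) = (2 * nat \<lfloor>R\<rfloor> + 1) ^ CARD('d)"
  unfolding lball_PiE by (simp add: card_PiE) (simp add: nat_add_distrib nat_mult_distrib)

lemma card_lball_le:
  assumes "R \<ge> 1"
  shows "real (card (lball (x::'d::finite pt) R)) \<le> (3 * R) ^ CARD('d)"
proof -
  have "real (2 * nat \<lfloor>R\<rfloor> + 1) \<le> 3 * R"
  proof -
    have "real_of_int \<lfloor>R\<rfloor> \<le> R" by (rule of_int_floor_le)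
    moreover have "\<lfloor>R\<rfloor> \<ge> 0" using assms by simp
    ultimately show ?thesis using assms by (simp add: of_nat_nat, linarith)
  qed
  then have "real (2 * nat \<lfloor>R\<rfloor> + 1) ^ CARD('d) \<le> (3 * R) ^ CARD('d)"
    by (intro power_mono) auto
  then show ?thesis using assms
    by (simp add: card_lball del: of_nat_Suc)
qed

lemma ptadd_origin [simp]: "ptadd origin x = x" "ptadd x origin = x"
  by (auto simp: ptadd_def origin_def)

definition pneg :: "'d pt \<Rightarrow> 'd pt" where "pneg x = (\<lambda>i. - x i)"

lemma ptadd_neg [simp]: "ptadd (ptadd v x) (pneg x) = v" "ptadd (ptadd v (pneg x)) x = v"
  by (auto simp: ptadd_def pneg_def)

lemma inj_ptadd: "inj (\<lambda>v. ptadd v x)"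
  by (rule inj_on_inverseI[where g="\<lambda>v. ptadd v (pneg x)"]) simp

lemma adj_ptadd [simp]: "adj (ptadd y x) (ptadd z x) = adj (y::'d::finite pt) z"
  by (simp add: adj_def l1dist_def ptadd_def)

lemma conn_in_ptadd:
  assumes "conn_in A y z" "\<And>v. v \<in> A \<Longrightarrow> ptadd v x \<in> B"
  shows "conn_in B (ptadd y x) (ptadd z x)"
  using assms(1)
proof induction
  case (refl y) then show ?case using assms(2) by (intro conn_in.refl) 
next
  case (step y z w) then show ?case using assms(2) by (metis adj_ptadd conn_in.step)
qed

lemma Sset_shift: "v \<in> Sset (shift x \<omega>) \<longleftrightarrow> ptadd v x \<in> Sset \<omega>"
  by (simp add: Sset_def shift_def)

lemma conn_shift:
  "conn_in (Sset (shift x \<omega>)) y z \<longleftrightarrow> conn_in (Sset \<omega>) (ptadd y x) (ptadd z x)"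
proof
  assume "conn_in (Sset (shift x \<omega>)) y z"
  then show "conn_in (Sset \<omega>) (ptadd y x) (ptadd z x)"
    by (rule conn_in_ptadd) (simp add: Sset_shift)
next
  assume "conn_in (Sset \<omega>) (ptadd y x) (ptadd z x)"
  from conn_in_ptadd[OF this, of "pneg x" "Sset (shift x \<omega>)"]
  show "conn_in (Sset (shift x \<omega>)) y z" by (simp add: Sset_shift)
qed

lemma comp_shift: "comp \<omega> (ptadd y x) = (\<lambda>v. ptadd v x) ` comp (shift x \<omega>) y"
proof safe
  fix w assume "w \<in> comp \<omega> (ptadd y x)"
  then have "ptadd (ptadd w (pneg x)) x \<in> comp \<omega> (ptadd y x)" by simp
  then have "ptadd w (pneg x) \<in> comp (shift x \<omega>) y"
    unfolding comp_def by (simp only: mem_Collect_eq conn_shift)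
  then show "w \<in> (\<lambda>v. ptadd v x) ` comp (shift x \<omega>) y"
    by (rule rev_image_eqI) simp
next
  fix w assume "w \<in> comp (shift x \<omega>) y"
  then show "ptadd w x \<in> comp \<omega> (ptadd y x)"
    unfolding comp_def by (simp add: conn_shift)
qed

lemma Sinf_shift: "y \<in> Sinf (shift x \<omega>) \<longleftrightarrow> ptadd y x \<in> Sinf \<omega>"
proof -
  have "infinite (comp \<omega> (ptadd y x)) \<longleftrightarrow> infinite (comp (shift x \<omega>) y)"
    unfolding comp_shift using finite_image_iff[OF inj_on_subset[OF inj_ptadd subset_UNIV]]
    by blast
  then show ?thesis unfolding Sinf_def by (simp add: Sset_shift)
qed

lemma lball_ptadd: "lball (ptadd y x) R = (\<lambda>v. ptadd v x) ` lball y R"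
proof safe
  fix w assume "w \<in> lball (ptadd y x) R"
  then have "ptadd w (pneg x) \<in> lball y R" by (simp add: lball_def ptadd_def pneg_def algebra_simps)
  then show "w \<in> (\<lambda>v. ptadd v x) ` lball y R" by (rule rev_image_eqI) simp
qed (simp add: lball_def ptadd_def)

lemma dens_shift: "dens (shift x \<omega>) y R = dens \<omega> (ptadd y x) R"
proof -
  have inj: "inj_on (\<lambda>v. ptadd v x) S" for S by (rule inj_on_subset[OF inj_ptadd]) simp
  have "Sinf \<omega> \<inter> lball (ptadd y x) R = (\<lambda>v. ptadd v x) ` (Sinf (shift x \<omega>) \<inter> lball y R)"
    unfolding lball_ptadd
  proof safe
    fix w assume "w \<in> lball y R" "ptadd w x \<in> Sinf \<omega>"
    then show "ptadd w x \<in> (\<lambda>v. ptadd v x) ` (Sinf (shift x \<omega>) \<inter> lball y R)"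
      by (intro imageI) (simp add: Sinf_shift)
  qed (auto simp: Sinf_shift)
  then show ?thesis unfolding dens_def lball_ptadd
    by (simp add: card_image[OF inj])
qed

lemma conn_in_path1:
  "conn_in A x y \<Longrightarrow> \<exists>ps. ps \<noteq> [] \<and> hd ps = x \<and> last ps = y \<and> successively adj ps \<and> set ps \<subseteq> A"
proof (induction rule: conn_in.induct)
  case (refl x) then show ?case by (intro exI[of _ "[x]"]) auto
next
  case (step x y z)
  then obtain ps where ps: "ps \<noteq> []" "hd ps = x" "last ps = y" "successively adj ps" "set ps \<subseteq> A"
    by blast
  then show ?case using step
    by (intro exI[of _ "ps @ [z]"]) (auto simp: successively_append_iff)
qed

lemma conn_in_path2:
  "ps \<noteq> [] \<Longrightarrow> successively adj ps \<Longrightarrow> set ps \<subseteq> A \<Longrightarrow> conn_in A (hd ps) (last ps)"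
proof (induction ps rule: rev_induct)
  case Nil then show ?case by simp
next
  case (snoc z qs)
  show ?case
  proof (cases "qs = []")
    case True then show ?thesis using snoc by (auto intro: conn_in.refl)
  next
    case False
    then have "conn_in A (hd qs) (last qs)" using snoc by (auto simp: successively_append_iff)
    moreover have "adj (last qs) z" using snoc False by (auto simp: successively_append_iff)
    ultimately show ?thesis using snoc False by (auto intro: conn_in.step)
  qed
qed

lemma conn_in_path:
  "conn_in A x y \<longleftrightarrow> (\<exists>ps. (ps \<noteq> [] \<and> hd ps = x \<and> last ps = y \<and> successively adj ps) \<and> (\<forall>z\<in>set ps. z \<in> A))"
proof
  assume "conn_in A x y"
  from conn_in_path1[OF this] obtain ps where
    "ps \<noteq> []" "hd ps = x" "last ps = y" "successively adj ps" "set ps \<subseteq> A" by blast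
  then show "\<exists>ps. (ps \<noteq> [] \<and> hd ps = x \<and> last ps = y \<and> successively adj ps) \<and> (\<forall>z\<in>set ps. z \<in> A)"
    by blast
next
  assume "\<exists>ps. (ps \<noteq> [] \<and> hd ps = x \<and> last ps = y \<and> successively adj ps) \<and> (\<forall>z\<in>set ps. z \<in> A)"
  then obtain ps where "ps \<noteq> []" "hd ps = x" "last ps = y" "successively adj ps" "set ps \<subseteq> A"
    by blast
  with conn_in_path2[of ps A] show "conn_in A x y" by simp
qed

lemma pred_coord [measurable]: "Measurable.pred Omega_measure (\<lambda>\<omega>. \<omega> (y::'d::finite pt))"
proof -
  have "(\<lambda>\<omega>. \<omega> y) \<in> measurable Omega_measure (count_space UNIV)"
    unfolding Omega_measure_def by (rule measurable_component_singleton) simp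
  from pred_sets2[OF _ this, of "{True}"] show ?thesis by simp
qed

lemma pred_conn [measurable]: "Measurable.pred Omega_measure (\<lambda>\<omega>. conn_in (Sset \<omega>) x (y::'d::finite pt))"
  unfolding conn_in_path Sset_def mem_Collect_eq
  apply (rule pred_intros_countable(2))
  apply (rule pred_intros_conj1')
  apply (rule pred_intros_finite(3))
   apply simp
  apply (rule pred_coord)
  done

lemma infinite_comp_iff:
  "infinite (comp \<omega> x) \<longleftrightarrow> (\<forall>N::nat. \<exists>y. y \<notin> lball x (real N) \<and> conn_in (Sset \<omega>) x y)"
proof
  assume inf: "infinite (comp \<omega> x)"
  show "\<forall>N::nat. \<exists>y. y \<notin> lball x (real N) \<and> conn_in (Sset \<omega>) x y"
  proof
    fix N :: nat
    have "\<not> comp \<omega> x \<subseteq> lball x (real N)" using inf finite_subset finite_lball by blast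
    then show "\<exists>y. y \<notin> lball x (real N) \<and> conn_in (Sset \<omega>) x y" by (auto simp: comp_def)
  qed
next
  assume H: "\<forall>N::nat. \<exists>y. y \<notin> lball x (real N) \<and> conn_in (Sset \<omega>) x y"
  show "infinite (comp \<omega> x)"
  proof
    assume fin: "finite (comp \<omega> x)"
    define N where "N = Max ((\<lambda>(y,i). nat \<bar>y i - x i\<bar>) ` (comp \<omega> x \<times> UNIV))"
    have "comp \<omega> x \<subseteq> lball x (real N)"
    proof
      fix y assume y: "y \<in> comp \<omega> x"
      have "nat \<bar>y i - x i\<bar> \<le> N" for i
        unfolding N_def using fin y by (intro Max_ge) auto
      then have "\<bar>y i - x i\<bar> \<le> int N" for i by (simp add: nat_le_iff)
      then have "real_of_int \<bar>y i - x i\<bar> \<le> real N" for i by (metis of_int_le_iff of_int_of_nat_eq)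
      then show "y \<in> lball x (real N)" unfolding lball_def by auto
    qed
    with H show False by (auto simp: comp_def)
  qed
qed

lemma pred_Sinf [measurable]: "Measurable.pred Omega_measure (\<lambda>\<omega>. (x::'d::finite pt) \<in> Sinf \<omega>)"
  unfolding Sinf_def mem_Collect_eq infinite_comp_iff Sset_def
  apply (rule pred_intros_logic(3))
   apply (rule pred_coord)
  apply (rule pred_intros_countable(1))
  apply (rule pred_intros_countable(2))
  apply (rule pred_intros_conj1')
  apply (rule pred_conn[unfolded Sset_def])
  done

lemma pred_Sinf_inter:
  assumes "finite B"
  shows "Measurable.pred Omega_measure (\<lambda>\<omega>. (Q::'d pt set \<Rightarrow> bool) (Sinf \<omega> \<inter> (B::'d::finite pt set)))"
proof -
  have eq: "Q (Sinf \<omega> \<inter> B) \<longleftrightarrow> (\<exists>T\<in>Pow B. Q T \<and> (\<forall>y\<in>B. (y \<in> Sinf \<omega>) = (y \<in> T)))" for \<omega>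
  proof
    assume "Q (Sinf \<omega> \<inter> B)" then show "\<exists>T\<in>Pow B. Q T \<and> (\<forall>y\<in>B. (y \<in> Sinf \<omega>) = (y \<in> T))"
      by (intro bexI[of _ "Sinf \<omega> \<inter> B"]) auto
  next
    assume "\<exists>T\<in>Pow B. Q T \<and> (\<forall>y\<in>B. (y \<in> Sinf \<omega>) = (y \<in> T))"
    then obtain T where "T \<subseteq> B" "Q T" "\<forall>y\<in>B. (y \<in> Sinf \<omega>) = (y \<in> T)" by auto
    moreover then have "Sinf \<omega> \<inter> B = T" by auto
    ultimately show "Q (Sinf \<omega> \<inter> B)" by simp
  qed
  show ?thesis unfolding eq
    apply (rule pred_intros_finite(4))
    using assms apply simp
    apply (rule pred_intros_conj1')
    apply (rule pred_intros_finite(3))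
    using assms apply simp
    subgoal for T y by (cases "y \<in> T") (simp_all add: pred_Sinf pred_intros_logic(2))
    done
qed

lemma pred_dens [measurable]: "Measurable.pred Omega_measure (\<lambda>\<omega>. (Q::real\<Rightarrow>bool) (dens \<omega> (x::'d::finite pt) R))"
  unfolding dens_def by (rule pred_Sinf_inter[OF finite_lball])

lemma dens_floor: "dens \<omega> x R = dens \<omega> x (real_of_int \<lfloor>R\<rfloor>)"
  unfolding dens_def using lball_floor[of x R] by simp

lemma lball_mono: "r \<le> r' \<Longrightarrow> lball x r \<subseteq> lball x r'"
  unfolding lball_def by (auto intro: order_trans)

lemma r_scale_mono:
  assumes "kappa_reg kd2 chk6 d \<alpha> \<ge> 0" "1 + DS \<ge> 0" "1 \<le> R" "R \<le> R'"
  shows "r_scale kd2 chk6 d DS \<alpha> R \<le> r_scale kd2 chk6 d DS \<alpha> R'"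
proof -
  have "ln R \<le> ln R'" using assms by simp
  moreover have "0 \<le> ln R" using assms by simp
  ultimately have "ln R powr (1 + DS) \<le> ln R' powr (1 + DS)"
    using assms by (intro powr_mono2) auto
  then show ?thesis unfolding r_scale_def using assms(1) by (simp add: mult_left_mono)
qed

lemma Rden_ge_iff:
  "ereal t \<le> R_den kd2 chk6 DS et \<omega> \<alpha> \<longleftrightarrow>
   (\<forall>R0. R0 \<ge> 1 \<and> (\<forall>R\<ge>R0. dens_good kd2 chk6 DS et \<omega> \<alpha> R) \<longrightarrow> t \<le> R0)"
  unfolding R_den_def le_Inf_iff by auto

lemma Rden_ge_1: "1 \<le> R_den kd2 chk6 DS et \<omega> \<alpha>"
  using Rden_ge_iff[of 1 kd2 chk6 DS et \<omega> \<alpha>] by (simp add: one_ereal_def)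

lemma Rden_good:
  assumes k: "kappa_reg kd2 chk6 CARD('d) \<alpha> \<ge> 0" "1 + DS \<ge> 0"
    and R: "ereal R \<ge> R_den kd2 chk6 DS et (\<omega>::'d::finite config) \<alpha>"
  shows "dens_good kd2 chk6 DS et \<omega> \<alpha> R"
proof -
  define R' where "R' = (R + (of_int \<lfloor>R\<rfloor> + 1)) / 2"
  have RR': "R < R'" "R' < of_int \<lfloor>R\<rfloor> + 1" unfolding R'_def
    using of_int_floor_le[of R] real_of_int_floor_add_one_gt[of R] by (simp_all add: field_simps)
  have fl: "\<lfloor>R'\<rfloor> = \<lfloor>R\<rfloor>" using RR' by (simp add: floor_eq_iff) linarith
  have "R_den kd2 chk6 DS et \<omega> \<alpha> < ereal R'" using R RR' by (simp add: le_less_trans)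
  then obtain R0 where R0: "R0 \<ge> 1" "\<forall>R\<ge>R0. dens_good kd2 chk6 DS et \<omega> \<alpha> R" "ereal R0 < ereal R'"
    unfolding R_den_def Inf_less_iff by auto
  have R1: "1 \<le> R" using Rden_ge_1[of kd2 chk6 DS et \<omega> \<alpha>] R
    by (metis ereal_less_eq(3) one_ereal_def order_trans)
  have g: "dens_good kd2 chk6 DS et \<omega> \<alpha> R'" using R0 by auto
  have sub: "lball origin (r_scale kd2 chk6 CARD('d) DS \<alpha> R) \<subseteq> lball origin (r_scale kd2 chk6 CARD('d) DS \<alpha> R')"
    using r_scale_mono[OF k R1, of R'] RR' by (intro lball_mono) auto
  show ?thesis
    unfolding dens_good_def
  proof
    fix x assume "x \<in> Sinf \<omega> \<inter> lball origin (r_scale kd2 chk6 CARD('d) DS \<alpha> R)"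
    then have "x \<in> Sinf \<omega> \<inter> lball origin (r_scale kd2 chk6 CARD('d) DS \<alpha> R')" using sub by auto
    with g have "(1 - \<alpha>) * et \<le> dens \<omega> x R' \<and> dens \<omega> x R' \<le> (1 + \<alpha>) * et"
      unfolding dens_good_def by blast
    then show "(1 - \<alpha>) * et \<le> dens \<omega> x R \<and> dens \<omega> x R \<le> (1 + \<alpha>) * et"
      using dens_floor[of \<omega> x R] dens_floor[of \<omega> x R'] fl by simp
  qed
qed

lemma good_all_iff:
  "(\<forall>R\<ge>R0. dens_good kd2 chk6 DS et (\<omega>::'d::finite config) \<alpha> R) \<longleftrightarrow>
   (\<forall>x::'d pt. \<forall>k::int. (\<exists>R\<ge>R0. \<lfloor>R\<rfloor> = k \<and> x \<in> lball origin (r_scale kd2 chk6 CARD('d) DS \<alpha> R)) \<longrightarrow>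
      x \<in> Sinf \<omega> \<longrightarrow> ((1 - \<alpha>) * et \<le> dens \<omega> x (of_int k) \<and> dens \<omega> x (of_int k) \<le> (1 + \<alpha>) * et))"
  unfolding dens_good_def
proof (intro iffI allI impI)
  fix x :: "'d pt" and k :: int
  assume H: "\<forall>R\<ge>R0. \<forall>x\<in>Sinf \<omega> \<inter> lball origin (r_scale kd2 chk6 CARD('d) DS \<alpha> R).
      (1 - \<alpha>) * et \<le> dens \<omega> x R \<and> dens \<omega> x R \<le> (1 + \<alpha>) * et"
    and E: "\<exists>R\<ge>R0. \<lfloor>R\<rfloor> = k \<and> x \<in> lball origin (r_scale kd2 chk6 CARD('d) DS \<alpha> R)"
    and x: "x \<in> Sinf \<omega>"
  from E obtain R where "R \<ge> R0" "\<lfloor>R\<rfloor> = k" "x \<in> lball origin (r_scale kd2 chk6 CARD('d) DS \<alpha> R)"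
    by blast
  moreover have "x \<in> Sinf \<omega> \<inter> lball origin (r_scale kd2 chk6 CARD('d) DS \<alpha> R)" using x calculation by blast
  ultimately have "(1 - \<alpha>) * et \<le> dens \<omega> x R \<and> dens \<omega> x R \<le> (1 + \<alpha>) * et"
    using H by blast
  with dens_floor[of \<omega> x R] \<open>\<lfloor>R\<rfloor> = k\<close>
  show "(1 - \<alpha>) * et \<le> dens \<omega> x (of_int k) \<and> dens \<omega> x (of_int k) \<le> (1 + \<alpha>) * et"
    by simp
next
  fix R x
  assume H: "\<forall>x k. (\<exists>R\<ge>R0. \<lfloor>R\<rfloor> = k \<and> x \<in> lball origin (r_scale kd2 chk6 CARD('d) DS \<alpha> R)) \<longrightarrow>
      x \<in> Sinf \<omega> \<longrightarrow> ((1 - \<alpha>) * et \<le> dens \<omega> x (of_int k) \<and> dens \<omega> x (of_int k) \<le> (1 + \<alpha>) * et)"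
    and R: "R0 \<le> R"
  show "\<forall>x\<in>Sinf \<omega> \<inter> lball origin (r_scale kd2 chk6 CARD('d) DS \<alpha> R).
      (1 - \<alpha>) * et \<le> dens \<omega> x R \<and> dens \<omega> x R \<le> (1 + \<alpha>) * et"
  proof
    fix x assume x: "x \<in> Sinf \<omega> \<inter> lball origin (r_scale kd2 chk6 CARD('d) DS \<alpha> R)"
    have "\<exists>R'\<ge>R0. \<lfloor>R'\<rfloor> = \<lfloor>R\<rfloor> \<and> x \<in> lball origin (r_scale kd2 chk6 CARD('d) DS \<alpha> R')"
      using R x by blast
    with H x dens_floor[of \<omega> x R]
    show "(1 - \<alpha>) * et \<le> dens \<omega> x R \<and> dens \<omega> x R \<le> (1 + \<alpha>) * et" by auto
  qed
qed

lemma Rden_ge_count: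
  "ereal t \<le> R_den kd2 chk6 DS et \<omega> \<alpha> \<longleftrightarrow>
   (\<forall>m::nat. 1 \<le> t - 1 / (real m + 1) \<longrightarrow> \<not> (\<forall>R\<ge>t - 1 / (real m + 1). dens_good kd2 chk6 DS et \<omega> \<alpha> R))"
  unfolding Rden_ge_iff
proof (intro iffI allI impI)
  fix m :: nat
  assume H: "\<forall>R0. 1 \<le> R0 \<and> (\<forall>R\<ge>R0. dens_good kd2 chk6 DS et \<omega> \<alpha> R) \<longrightarrow> t \<le> R0"
    and m: "1 \<le> t - 1 / (real m + 1)"
  have "\<not> t \<le> t - 1 / (real m + 1)" by (simp add: add_pos_nonneg)
  with H m show "\<not> (\<forall>R\<ge>t - 1 / (real m + 1). dens_good kd2 chk6 DS et \<omega> \<alpha> R)" by blast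
next
  fix R0
  assume H: "\<forall>m::nat. 1 \<le> t - 1 / (real m + 1) \<longrightarrow> \<not> (\<forall>R\<ge>t - 1 / (real m + 1). dens_good kd2 chk6 DS et \<omega> \<alpha> R)"
    and R0: "1 \<le> R0 \<and> (\<forall>R\<ge>R0. dens_good kd2 chk6 DS et \<omega> \<alpha> R)"
  show "t \<le> R0"
  proof (rule ccontr)
    assume "\<not> t \<le> R0"
    then have "0 < t - R0" by simp
    then obtain m where m: "inverse (real (Suc m)) < t - R0" using reals_Archimedean by blast
    then have m': "R0 < t - 1 / (real m + 1)" by (simp add: inverse_eq_divide add.commute)
    then have "1 \<le> t - 1 / (real m + 1)" using R0 by simp
    moreover have "\<forall>R\<ge>t - 1 / (real m + 1). dens_good kd2 chk6 DS et \<omega> \<alpha> R" using R0 m' by auto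
    ultimately show False using H by blast
  qed
qed

lemma pred_Rden_ge:
  "Measurable.pred Omega_measure (\<lambda>\<omega>::'d::finite config. ereal t \<le> R_den kd2 chk6 DS et \<omega> \<alpha>)"
  unfolding Rden_ge_count good_all_iff
  apply (rule pred_intros_countable(1))
  apply (rule pred_intros_imp')
  apply (rule pred_intros_logic(2))
  apply (rule pred_intros_countable(1))
  apply (rule pred_intros_countable(1))
  apply (rule pred_intros_imp')
  apply (rule pred_intros_logic(4))
   apply (rule pred_Sinf)
  apply (rule pred_intros_logic(3))
   apply (rule pred_dens)
  apply (rule pred_dens)
  done

lemma ln_succ_le: "(k::real) \<ge> 1 \<Longrightarrow> ln (k + 1) \<le> ln k + 1"
proof -
  assume k: "k \<ge> 1"
  have "k + 1 \<le> exp 1 * k"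
  proof -
    have "2 \<le> exp (1::real)" using exp_ge_add_one_self[of 1] by simp
    then have "2 * k \<le> exp 1 * k" using k by (intro mult_right_mono) auto
    then show ?thesis using k by linarith
  qed
  then have "ln (k + 1) \<le> ln (exp 1 * k)" using k by (subst ln_le_cancel_iff) auto
  also have "\<dots> = 1 + ln k" using k by (simp add: ln_mult)
  finally show ?thesis by simp
qed

lemma step1:
  fixes p :: real assumes p: "p > 1"
  shows "\<exists>k1. \<forall>k\<ge>k1. ln (k + 1) powr p \<le> 3/2 * ln k powr p"
proof -
  define q where "q = (3/2::real) powr (1/p)"
  have q1: "q > 1" unfolding q_def using p powr_less_cancel_iff[of "3/2::real" 0 "1/p"] by simp
  have qp: "q powr p = 3/2" unfolding q_def using p by (simp add: powr_powr)
  define k1 where "k1 = max 1 (exp (1 / (q - 1)))"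
  have "ln (k + 1) powr p \<le> 3/2 * ln k powr p" if k: "k \<ge> k1" for k
  proof -
    have k1': "k \<ge> 1" "k \<ge> exp (1 / (q - 1))" using k unfolding k1_def by auto
    then have "ln k \<ge> 1 / (q - 1)" by (subst ln_ge_iff) auto
    then have "1 \<le> (q - 1) * ln k" using q1 by (simp add: field_simps)
    then have "ln (k + 1) \<le> q * ln k" using ln_succ_le[OF k1'(1)] by (simp add: algebra_simps)
    moreover have "0 \<le> ln (k + 1)" using k1' by simp
    ultimately have "ln (k + 1) powr p \<le> (q * ln k) powr p" using p by (intro powr_mono2) auto
    also have "\<dots> = q powr p * ln k powr p" using q1 k1' by (simp add: powr_mult)
    finally show ?thesis using qp by simp
  qed
  then show ?thesis by blast
qed

lemma step3:
  fixes p c :: real assumes p: "p > 1" and c: "c > 0"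
  shows "summable (\<lambda>j::nat. exp (- c * ln (real j) powr p))"
proof (rule summable_comparison_test')
  show "summable (\<lambda>j::nat. inverse (real j ^ 2))" by (rule inverse_power_summable) simp
  define N :: nat where "N = nat \<lceil>max 1 (exp ((2 / c) powr (1 / (p - 1))))\<rceil>"
  fix j :: nat assume j: "j \<ge> N"
  have jN: "real j \<ge> exp ((2 / c) powr (1 / (p - 1)))" "real j \<ge> 1"
    using j unfolding N_def by linarith+
  then have lj: "ln (real j) \<ge> (2 / c) powr (1 / (p - 1))" by (subst ln_ge_iff) auto
  have "(2 / c) powr (1 / (p - 1)) > 0" using c by simp
  then have lpos: "ln (real j) > 0" using lj by linarith
  have "ln (real j) powr (p - 1) \<ge> ((2 / c) powr (1 / (p - 1))) powr (p - 1)"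
    using lj p by (intro powr_mono2) auto
  also have "((2 / c) powr (1 / (p - 1))) powr (p - 1) = 2 / c"
    using p c by (simp add: powr_powr)
  finally have A: "ln (real j) powr (p - 1) \<ge> 2 / c" .
  have "ln (real j) powr p = ln (real j) powr (1 + (p - 1))" by simp
  also have "\<dots> = ln (real j) powr 1 * ln (real j) powr (p - 1)" by (rule powr_add)
  also have "\<dots> = ln (real j) * ln (real j) powr (p - 1)" using lpos by simp
  finally have "ln (real j) powr p = ln (real j) * ln (real j) powr (p - 1)" .
  moreover have A': "2 \<le> c * ln (real j) powr (p - 1)" using A c by (simp add: divide_le_eq mult.commute)
  ultimately have "c * ln (real j) powr p = ln (real j) * (c * ln (real j) powr (p - 1))" by simp
  also have "\<dots> \<ge> ln (real j) * 2" using A' lpos by (intro mult_left_mono) auto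
  finally have B: "c * ln (real j) powr p \<ge> 2 * ln (real j)" by simp
  have "exp (- c * ln (real j) powr p) \<le> exp (- 2 * ln (real j))" using B by simp
  also have "exp (- 2 * ln (real j)) = inverse (real j ^ 2)"
  proof -
    have jp: "real j ^ 2 > 0" using jN by simp
    have "ln (real j ^ 2) = 2 * ln (real j)" using jN by (simp add: ln_realpow)
    then have "exp (- 2 * ln (real j)) = inverse (exp (ln (real j ^ 2)))" by (simp add: exp_minus)
    also have "\<dots> = inverse (real j ^ 2)" using jp by (subst exp_ln) auto
    finally show ?thesis .
  qed
  finally show "norm (exp (- c * ln (real j) powr p)) \<le> inverse (real j ^ 2)" by simp
qed

lemma tail_bound:
  fixes p a e D :: real
  assumes p: "p > 1" and a: "a > 0" and e: "0 \<le> e" "e \<le> a / 2" and D: "D \<ge> 0"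
  shows "\<exists>N0 C c. N0 \<ge> 2 \<and> c > 0 \<and> C > 0 \<and> (\<forall>n::nat\<ge>N0.
     summable (\<lambda>i. D * exp (e * ln (real (n - 1 + i) + 1) powr p) * exp (- a * ln (real (n - 1 + i)) powr p)) \<and>
     (\<Sum>i. D * exp (e * ln (real (n - 1 + i) + 1) powr p) * exp (- a * ln (real (n - 1 + i)) powr p))
        \<le> C * exp (- c * ln (real n) powr p))"
proof -
  define f where "f k = D * exp (e * ln (real k + 1) powr p) * exp (- a * ln (real k) powr p)" for k :: nat
  obtain k1 where k1: "\<And>k. k \<ge> k1 \<Longrightarrow> ln (k + 1) powr p \<le> 3/2 * ln k powr p"
    using step1[OF p] by blast
  define c1 where "c1 = a / 6"
  have c1: "c1 > 0" unfolding c1_def using a by simp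
  define h where "h j = exp (- (c1 / 2) * ln (real j) powr p)" for j :: nat
  have hs: "summable h" unfolding h_def using step3[OF p, of "c1/2"] c1 by simp
  have h0: "h j \<ge> 0" for j unfolding h_def by simp
  define S where "S = (\<Sum>j. h j)"
  have S0: "S \<ge> 0" unfolding S_def using hs h0 by (simp add: suminf_nonneg)
  define N0 where "N0 = max 2 (nat \<lceil>k1\<rceil> + 1)"
  have fk: "f k \<le> D * exp (- c1 * ln (real k + 1) powr p)" if k: "real k \<ge> k1" "k \<ge> 1" for k
  proof -
    let ?L1 = "ln (real k + 1) powr p" and ?L0 = "ln (real k) powr p"
    have L: "?L1 \<le> 3/2 * ?L0" using k1 k by simp
    have L1: "?L1 \<ge> 0" by simp
    have "e * ?L1 \<le> a / 2 * ?L1" using e L1 by (intro mult_right_mono) auto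
    moreover have "a * ?L1 \<le> a * (3/2 * ?L0)" using L a by (intro mult_left_mono) auto
    moreover have "- (a/6) * ?L1 = - (a * ?L1)/6" "a/2 * ?L1 = (a*?L1)/2" "- a * ?L0 = -(a*?L0)"
      "a * (3/2 * ?L0) = 3/2 * (a * ?L0)" by simp_all
    ultimately have "e * ?L1 + - a * ?L0 \<le> - c1 * ?L1" unfolding c1_def by linarith
    then have "exp (e * ?L1) * exp (- a * ?L0) \<le> exp (- c1 * ?L1)" by (simp add: exp_add[symmetric])
    then show ?thesis unfolding f_def using D by (simp add: mult.assoc mult_left_mono)
  qed
  have main: "f (n - 1 + i) \<le> D * exp (- (c1 / 2) * ln (real n) powr p) * h (n + i)"
    if n: "n \<ge> N0" for n i
  proof -
    have nk: "real (n - 1 + i) \<ge> k1" "n - 1 + i \<ge> 1" using n unfolding N0_def by linarith+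
    have rn: "real (n - 1 + i) + 1 = real (n + i)" using n unfolding N0_def by auto
    have n1: "real n \<ge> 1" using n unfolding N0_def by auto
    have "ln (real n) powr p \<le> ln (real (n + i)) powr p"
      using n1 p by (intro powr_mono2) auto
    then have E: "exp (- (c1 / 2) * ln (real (n + i)) powr p) \<le> exp (- (c1 / 2) * ln (real n) powr p)"
      using c1 by simp
    have "exp (- c1 * ln (real (n + i)) powr p) =
        exp (- (c1 / 2) * ln (real (n + i)) powr p) * h (n + i)"
      unfolding h_def by (simp add: exp_add[symmetric])
    also have "\<dots> \<le> exp (- (c1 / 2) * ln (real n) powr p) * h (n + i)"
      using E h0 by (intro mult_right_mono) auto
    finally have "D * exp (- c1 * ln (real (n + i)) powr p) \<le> D * (exp (- (c1 / 2) * ln (real n) powr p) * h (n + i))"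
      using D by (intro mult_left_mono) auto
    then show ?thesis using fk[OF nk] rn by (simp add: mult.assoc)
  qed
  have f0: "f k \<ge> 0" for k unfolding f_def using D by simp
  show ?thesis
  proof (intro exI conjI allI impI)
    show "N0 \<ge> 2" unfolding N0_def by simp
    show "c1 / 2 > 0" using c1 by simp
    show "D * S + 1 > 0" using D S0 by (simp add: add_nonneg_pos)
    fix n :: nat assume n: "n \<ge> N0"
    define En where "En = exp (- (c1 / 2) * ln (real n) powr p)"
    have hsn: "summable (\<lambda>i. h (n + i))"
      using summable_ignore_initial_segment[OF hs, of n] by (simp add: add.commute)
    have gs: "summable (\<lambda>i. D * En * h (n + i))" using hsn by (intro summable_mult)
    have fs: "summable (\<lambda>i. f (n - 1 + i))"
      by (rule summable_comparison_test'[OF gs, of 0]) (use main[OF n] f0 in \<open>auto simp: En_def\<close>)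
    then show "summable (\<lambda>i. D * exp (e * ln (real (n - 1 + i) + 1) powr p) * exp (- a * ln (real (n - 1 + i)) powr p))"
      unfolding f_def .
    have "(\<Sum>i. f (n - 1 + i)) \<le> (\<Sum>i. D * En * h (n + i))"
      using fs gs main[OF n] unfolding En_def by (intro suminf_le) auto
    also have "\<dots> = D * En * (\<Sum>i. h (n + i))" using hsn by (rule suminf_mult)
    also have "(\<Sum>i. h (n + i)) \<le> S"
    proof -
      have "S = (\<Sum>i. h (i + n)) + sum h {..<n}" unfolding S_def by (rule suminf_split_initial_segment[OF hs])
      moreover have "sum h {..<n} \<ge> 0" using h0 by (simp add: sum_nonneg)
      ultimately show ?thesis by (simp add: add.commute)
    qed
    then have "D * En * (\<Sum>i. h (n + i)) \<le> D * En * S"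
      using D by (intro mult_left_mono) (auto simp: En_def)
    also have "\<dots> \<le> (D * S + 1) * En" using D S0 by (simp add: En_def algebra_simps)
    finally show "(\<Sum>i. D * exp (e * ln (real (n - 1 + i) + 1) powr p) * exp (- a * ln (real (n - 1 + i)) powr p))
        \<le> (D * S + 1) * exp (- (c1 / 2) * ln (real n) powr p)"
      unfolding f_def En_def .
  qed
qed

lemma Rden_incl:
  assumes k: "kappa_reg kd2 chk6 CARD('d) \<alpha> \<ge> 0" "1 + DS \<ge> 0"
    and n: "n \<ge> (2::nat)"
    and R: "ereal (real n) \<le> R_den kd2 chk6 DS et (\<omega>::'d::finite config) \<alpha>"
  shows "\<exists>k::nat\<ge>n - 1. \<exists>x\<in>lball origin (r_scale kd2 chk6 CARD('d) DS \<alpha> (real k + 1)).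
     x \<in> Sinf \<omega> \<and> (dens \<omega> x (real k) < (1 - \<alpha>) * et \<or> dens \<omega> x (real k) > (1 + \<alpha>) * et)"
proof -
  have H: "\<forall>R0. 1 \<le> R0 \<and> (\<forall>R\<ge>R0. dens_good kd2 chk6 DS et \<omega> \<alpha> R) \<longrightarrow> real n \<le> R0"
    using R by (simp only: Rden_ge_iff)
  have n1: "1 \<le> real n - 1" using n by simp
  have "\<not> (\<forall>R\<ge>real n - 1. dens_good kd2 chk6 DS et \<omega> \<alpha> R)"
  proof
    assume "\<forall>R\<ge>real n - 1. dens_good kd2 chk6 DS et \<omega> \<alpha> R"
    with H n1 have "real n \<le> real n - 1" by blast
    then show False by simp
  qed
  then obtain R where R1: "R \<ge> real n - 1" and ng: "\<not> dens_good kd2 chk6 DS et \<omega> \<alpha> R" by auto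
  then obtain x where x: "x \<in> Sinf \<omega>" "x \<in> lball origin (r_scale kd2 chk6 CARD('d) DS \<alpha> R)"
    and bad: "\<not> ((1 - \<alpha>) * et \<le> dens \<omega> x R \<and> dens \<omega> x R \<le> (1 + \<alpha>) * et)"
    unfolding dens_good_def by auto
  define k where "k = nat \<lfloor>R\<rfloor>"
  have Rge1: "R \<ge> 1" using R1 n by linarith
  have kR: "real k = of_int \<lfloor>R\<rfloor>" unfolding k_def using Rge1 by simp
  have "real (n - 1) \<le> R" using R1 n by (simp add: of_nat_diff)
  then have "int (n - 1) \<le> \<lfloor>R\<rfloor>" by (simp add: le_floor_iff)
  then have kn: "k \<ge> n - 1" unfolding k_def using Rge1 by (simp add: le_nat_iff)
  have Rk: "R \<le> real k + 1" using kR real_of_int_floor_add_one_gt[of R] by linarith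
  have "lball origin (r_scale kd2 chk6 CARD('d) DS \<alpha> R) \<subseteq> lball origin (r_scale kd2 chk6 CARD('d) DS \<alpha> (real k + 1))"
    by (intro lball_mono r_scale_mono[OF k Rge1 Rk])
  moreover have "dens \<omega> x R = dens \<omega> x (real k)" using dens_floor[of \<omega> x R] kR by simp
  ultimately show ?thesis using x bad kn by (intro exI[of _ k]) auto
qed

theorem proposition3p2:
  fixes P :: "real \<Rightarrow> ('d::finite) config measure"
    and a b u :: real
    and fS :: "real \<Rightarrow> real \<Rightarrow> real" and DeltaS RS :: "real \<Rightarrow> real"
    and kd2 :: "real \<Rightarrow> real" and chk6 :: real
  assumes d2: "CARD('d) \<ge> 2"
    and ab: "0 < a" "a < b"
    and meas: "\<And>v. a < v \<Longrightarrow> v < b \<Longrightarrow> prob_space (P v) \<and> sets (P v) = sets Omega_measure"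
    and P1: "\<And>v. a < v \<Longrightarrow> v < b \<Longrightarrow> shift_invariant_ergodic (P v)"
    and P2: "cond_P2 a b P"
    and D: "cond_D a b P"
    and S1: "cond_S1 a b P fS DeltaS RS"
    and S2: "\<And>v. a < v \<Longrightarrow> v < b \<Longrightarrow> eta P v > 0" "continuous_on {a<..<b} (eta P)"
    and u: "a < u" "u < b"
    and chk6: "chk6 > 0"
    and kd2_pos: "\<And>\<alpha>. 0 < \<alpha> \<Longrightarrow> \<alpha> < 1 \<Longrightarrow> kd2 \<alpha> > 0"
    and kd2_mono: "mono_on {0<..<1} kd2"
    and kd2_bound: "\<And>\<alpha>. 0 < \<alpha> \<Longrightarrow> \<alpha> < 1 \<Longrightarrow> \<exists>kd1. \<forall>R\<ge>1.
        measure (P u) {\<omega> \<in> space (P u). origin \<in> Sinf \<omega> \<and>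
            (dens \<omega> origin R < (1 - \<alpha>) * eta P u \<or> dens \<omega> origin R > (1 + \<alpha>) * eta P u)}
          / eta P u
        \<le> kd1 * exp (- kd2 \<alpha> * ln R powr (1 + DeltaS u))"
  shows "\<forall>\<alpha>. 0 < \<alpha> \<and> \<alpha> < 1 \<longrightarrow>
     (\<exists>C c. C > 0 \<and> c > 0 \<and>
        (\<forall>n::nat. n \<ge> 1 \<longrightarrow>
           {\<omega> \<in> space (P u). R_den kd2 chk6 (DeltaS u) (eta P u) \<omega> \<alpha> \<ge> ereal (real n)} \<in> sets (P u) \<and>
           measure (P u) {\<omega> \<in> space (P u). R_den kd2 chk6 (DeltaS u) (eta P u) \<omega> \<alpha> \<ge> ereal (real n)}
             \<le> C * exp (- c * ln (real n) powr (1 + DeltaS u)))) \<and>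
     (AE \<omega> in P u. R_den kd2 chk6 (DeltaS u) (eta P u) \<omega> \<alpha> < \<infinity> \<and>
        (\<forall>R. ereal R \<ge> R_den kd2 chk6 (DeltaS u) (eta P u) \<omega> \<alpha> \<longrightarrow>
           dens_good kd2 chk6 (DeltaS u) (eta P u) \<omega> \<alpha> R))"
proof (intro allI impI)
  fix \<alpha> :: real assume \<alpha>: "0 < \<alpha> \<and> \<alpha> < 1"
  let ?M = "P u" and ?et = "eta P u" and ?DS = "DeltaS u" and ?d = "CARD('d)"
  let ?p = "1 + DeltaS u"
  let ?\<kappa> = "kappa_reg kd2 chk6 CARD('d) \<alpha>"
  let ?Rd = "\<lambda>\<omega>. R_den kd2 chk6 (DeltaS u) (eta P u) \<omega> \<alpha>"
  have ps: "prob_space ?M" and sM: "sets ?M = sets Omega_measure" using meas[OF u] by auto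
  interpret prob_space ?M by (rule ps)
  have spM: "space ?M = UNIV" using sets_eq_imp_space_eq[OF sM] space_Omega by simp
  have predM: "Measurable.pred ?M Q" if "Measurable.pred Omega_measure Q" for Q
    using that sM spM unfolding pred_def by (simp add: space_Omega)
  have et: "?et > 0" using S2(1)[OF u] .
  have DS: "?DS > 0" using S1 u unfolding cond_S1_def by blast
  have p: "?p > 1" using DS by simp
  have kd2a: "kd2 \<alpha> > 0" using kd2_pos \<alpha> by auto
  have d0: "real ?d > 0" by simp
  have kpos: "?\<kappa> > 0" unfolding kappa_reg_def using kd2a chk6 by simp
  have dk: "real ?d * ?\<kappa> \<le> kd2 \<alpha> / 2" unfolding kappa_reg_def using d0 by simp
  obtain kd1 where kd1: "\<And>R. R \<ge> 1 \<Longrightarrow>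
        measure ?M {\<omega> \<in> space ?M. origin \<in> Sinf \<omega> \<and>
            (dens \<omega> origin R < (1 - \<alpha>) * ?et \<or> dens \<omega> origin R > (1 + \<alpha>) * ?et)} / ?et
        \<le> kd1 * exp (- kd2 \<alpha> * ln R powr ?p)"
    using kd2_bound[of \<alpha>] \<alpha> by blast
  define E where "E x k = {\<omega> \<in> space ?M. x \<in> Sinf \<omega> \<and>
     (dens \<omega> x (real k) < (1 - \<alpha>) * ?et \<or> dens \<omega> x (real k) > (1 + \<alpha>) * ?et)}" for x and k :: nat
  have Emeas: "E x k \<in> sets ?M" for x k
  proof -
    have "Measurable.pred Omega_measure (\<lambda>\<omega>. x \<in> Sinf \<omega> \<and>
       (dens \<omega> x (real k) < (1 - \<alpha>) * ?et \<or> dens \<omega> x (real k) > (1 + \<alpha>) * ?et))"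
      by (rule pred_intros_logic(3)[OF pred_Sinf pred_dens[of "\<lambda>t. t < (1 - \<alpha>) * ?et \<or> t > (1 + \<alpha>) * ?et"]])
    from predE[OF predM[OF this]] show ?thesis unfolding E_def .
  qed
  have Eeq: "measure ?M (E x k) = measure ?M (E origin k)" for x k
  proof -
    have sh: "Defs.shift x \<in> measurable ?M ?M" "distr ?M ?M (Defs.shift x) = ?M"
      using P1[OF u] unfolding shift_invariant_ergodic_def by auto
    have "E x k = Defs.shift x -` E origin k \<inter> space ?M"
      unfolding E_def by (auto simp: Sinf_shift dens_shift spM)
    then have "measure ?M (E x k) = measure (distr ?M ?M (Defs.shift x)) (E origin k)"
      by (simp add: measure_distr[OF sh(1) Emeas])
    then show ?thesis using sh(2) by simp
  qed
  have E0: "measure ?M (E origin k) \<le> ?et * kd1 * exp (- kd2 \<alpha> * ln (real k) powr ?p)" if k: "k \<ge> 1" for k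
  proof -
    have "measure ?M (E origin k) / ?et \<le> kd1 * exp (- kd2 \<alpha> * ln (real k) powr ?p)"
      using kd1[of "real k"] k unfolding E_def by simp
    then show ?thesis using et by (simp add: divide_le_eq mult.commute mult.left_commute)
  qed
  have kd1pos: "kd1 \<ge> 0"
  proof -
    have "0 \<le> measure ?M (E origin 1) / ?et" using et by simp
    also have "\<dots> \<le> kd1" using kd1[of 1] unfolding E_def by simp
    finally show ?thesis .
  qed
  define F where "F k = (\<Union>x\<in>lball origin (r_scale kd2 chk6 ?d ?DS \<alpha> (real k + 1)). E x k)" for k :: nat
  have Fmeas: "F k \<in> sets ?M" for k
    unfolding F_def by (intro sets.finite_UN finite_lball Emeas)
  define D where "D = 3 ^ ?d * ?et * kd1"
  have D0: "D \<ge> 0" unfolding D_def using et kd1pos by simp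
  have Fbound: "measure ?M (F k) \<le> D * exp (real ?d * ?\<kappa> * ln (real k + 1) powr ?p) *
      exp (- kd2 \<alpha> * ln (real k) powr ?p)" if k: "k \<ge> 1" for k
  proof -
    let ?r = "r_scale kd2 chk6 ?d ?DS \<alpha> (real k + 1)"
    let ?L = "ln (real k + 1) powr ?p"
    let ?B = "lball (origin::'d pt) ?r"
    have r1: "?r \<ge> 1" unfolding r_scale_def using kpos by simp
    have s1: "measure ?M (F k) \<le> (\<Sum>x\<in>?B. measure ?M (E x k))"
      unfolding F_def by (intro measure_UNION_le finite_lball Emeas)
    have s2: "(\<Sum>x\<in>?B. measure ?M (E x k)) = real (card (?B)) * measure ?M (E origin k)"
    proof -
      have fe: "(\<lambda>x. measure ?M (E x k)) = (\<lambda>x. measure ?M (E origin k))"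
        by (rule ext) (rule Eeq)
      have "(\<Sum>x\<in>?B. measure ?M (E x k)) = (\<Sum>x\<in>?B. measure ?M (E origin k))"
        by (subst fe) (rule HOL.refl)
      then show ?thesis by simp
    qed
    have s3: "real (card (?B)) * measure ?M (E origin k) \<le> (3 * ?r) ^ ?d * (?et * kd1 * exp (- kd2 \<alpha> * ln (real k) powr ?p))"
      by (intro mult_mono card_lball_le r1 E0 k measure_nonneg zero_le_power) (use r1 in simp)
    have s4: "?r ^ ?d = exp (real ?d * (?\<kappa> * ?L))"
      unfolding r_scale_def by (rule exp_of_nat_mult[symmetric])
    have s5: "(3 * ?r) ^ ?d = 3 ^ ?d * exp (real ?d * (?\<kappa> * ?L))"
      by (simp only: power_mult_distrib s4)
    have s6: "(3 * ?r) ^ ?d * (?et * kd1 * exp (- kd2 \<alpha> * ln (real k) powr ?p)) =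
       D * exp (real ?d * ?\<kappa> * ?L) * exp (- kd2 \<alpha> * ln (real k) powr ?p)"
      unfolding s5 D_def by (simp only: mult_ac)
    show ?thesis using s1 s2 s3 s6 by linarith
  qed
  have e0: "0 \<le> real ?d * ?\<kappa>" using kpos by simp
  from tail_bound[OF p kd2a e0 dk D0] obtain N0 C0 c where N0: "N0 \<ge> 2" and c: "c > 0" and C0: "C0 > 0" and
    tb: "\<forall>n\<ge>N0.
     summable (\<lambda>i. D * exp (real ?d * ?\<kappa> * ln (real (n - 1 + i) + 1) powr ?p) * exp (- kd2 \<alpha> * ln (real (n - 1 + i)) powr ?p)) \<and>
     (\<Sum>i. D * exp (real ?d * ?\<kappa> * ln (real (n - 1 + i) + 1) powr ?p) * exp (- kd2 \<alpha> * ln (real (n - 1 + i)) powr ?p))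
        \<le> C0 * exp (- c * ln (real n) powr ?p)"
    by blast
  have Gmeas: "{\<omega> \<in> space ?M. ereal t \<le> ?Rd \<omega>} \<in> sets ?M" for t
    by (rule predE[OF predM[OF pred_Rden_ge]])
  have big: "measure ?M {\<omega> \<in> space ?M. ereal (real n) \<le> ?Rd \<omega>} \<le> C0 * exp (- c * ln (real n) powr ?p)"
    if n: "n \<ge> N0" for n
  proof -
    let ?f = "\<lambda>i. D * exp (real ?d * ?\<kappa> * ln (real (n - 1 + i) + 1) powr ?p) * exp (- kd2 \<alpha> * ln (real (n - 1 + i)) powr ?p)"
    have fs: "summable ?f" and fb: "suminf ?f \<le> C0 * exp (- c * ln (real n) powr ?p)" using tb n by auto
    have Fle: "measure ?M (F (n - 1 + i)) \<le> ?f i" for i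
      by (rule Fbound) (use n N0 in simp)
    have Fs: "summable (\<lambda>i. measure ?M (F (n - 1 + i)))"
      by (rule summable_comparison_test'[OF fs, of 0]) (use Fle in simp)
    have incl: "{\<omega> \<in> space ?M. ereal (real n) \<le> ?Rd \<omega>} \<subseteq> (\<Union>i. F (n - 1 + i))"
    proof
      fix \<omega> assume "\<omega> \<in> {\<omega> \<in> space ?M. ereal (real n) \<le> ?Rd \<omega>}"
      then have "ereal (real n) \<le> ?Rd \<omega>" by simp
      from Rden_incl[OF less_imp_le[OF kpos] _ _ this] DS n N0
      obtain k x where kx: "k \<ge> n - 1" "x \<in> lball origin (r_scale kd2 chk6 ?d ?DS \<alpha> (real k + 1))"
        "x \<in> Sinf \<omega> \<and> (dens \<omega> x (real k) < (1 - \<alpha>) * ?et \<or> dens \<omega> x (real k) > (1 + \<alpha>) * ?et)"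
        by auto
      then have "\<omega> \<in> F k" unfolding F_def E_def using spM by auto
      moreover have "k = n - 1 + (k - (n - 1))" using kx by simp
      ultimately show "\<omega> \<in> (\<Union>i. F (n - 1 + i))" by (metis UNIV_I UN_iff)
    qed
    have Um: "(\<Union>i. F (n - 1 + i)) \<in> sets ?M" using Fmeas by auto
    have "measure ?M {\<omega> \<in> space ?M. ereal (real n) \<le> ?Rd \<omega>} \<le> measure ?M (\<Union>i. F (n - 1 + i))"
      by (rule finite_measure_mono[OF incl Um])
    also have "\<dots> \<le> (\<Sum>i. measure ?M (F (n - 1 + i)))"
      by (rule finite_measure_subadditive_countably) (use Fmeas Fs in auto)
    also have "\<dots> \<le> suminf ?f" by (rule suminf_le[OF Fle Fs fs])
    finally show ?thesis using fb by simp
  qed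
  define C where "C = max C0 (exp (c * ln (real N0) powr ?p))"
  have Cpos: "C > 0" unfolding C_def using C0 by simp
  have bound: "measure ?M {\<omega> \<in> space ?M. ereal (real n) \<le> ?Rd \<omega>} \<le> C * exp (- c * ln (real n) powr ?p)"
    if n: "n \<ge> 1" for n
  proof (cases "n \<ge> N0")
    case True
    then have "measure ?M {\<omega> \<in> space ?M. ereal (real n) \<le> ?Rd \<omega>} \<le> C0 * exp (- c * ln (real n) powr ?p)"
      by (rule big)
    also have "\<dots> \<le> C * exp (- c * ln (real n) powr ?p)" unfolding C_def by (intro mult_right_mono) auto
    finally show ?thesis .
  next
    case False
    have "ln (real n) powr ?p \<le> ln (real N0) powr ?p"
      using n False DS by (intro powr_mono2) auto
    then have "1 \<le> exp (c * ln (real N0) powr ?p) * exp (- c * ln (real n) powr ?p)"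
      using c by (simp add: exp_add[symmetric] mult_left_mono)
    also have "\<dots> \<le> C * exp (- c * ln (real n) powr ?p)" unfolding C_def by (intro mult_right_mono) auto
    finally show ?thesis using prob_le_1 by (rule order_trans[rotated])
  qed
  show "(\<exists>C c. C > 0 \<and> c > 0 \<and>
        (\<forall>n::nat. n \<ge> 1 \<longrightarrow>
           {\<omega> \<in> space (P u). R_den kd2 chk6 (DeltaS u) (eta P u) \<omega> \<alpha> \<ge> ereal (real n)} \<in> sets (P u) \<and>
           measure (P u) {\<omega> \<in> space (P u). R_den kd2 chk6 (DeltaS u) (eta P u) \<omega> \<alpha> \<ge> ereal (real n)}
             \<le> C * exp (- c * ln (real n) powr (1 + DeltaS u)))) \<and>
     (AE \<omega> in P u. R_den kd2 chk6 (DeltaS u) (eta P u) \<omega> \<alpha> < \<infinity> \<and>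
        (\<forall>R. ereal R \<ge> R_den kd2 chk6 (DeltaS u) (eta P u) \<omega> \<alpha> \<longrightarrow>
           dens_good kd2 chk6 (DeltaS u) (eta P u) \<omega> \<alpha> R))"
  proof (intro conjI)
    show "\<exists>C c. C > 0 \<and> c > 0 \<and>
        (\<forall>n::nat. n \<ge> 1 \<longrightarrow>
           {\<omega> \<in> space (P u). R_den kd2 chk6 (DeltaS u) (eta P u) \<omega> \<alpha> \<ge> ereal (real n)} \<in> sets (P u) \<and>
           measure (P u) {\<omega> \<in> space (P u). R_den kd2 chk6 (DeltaS u) (eta P u) \<omega> \<alpha> \<ge> ereal (real n)}
             \<le> C * exp (- c * ln (real n) powr (1 + DeltaS u)))"
      apply (rule exI[of _ C], rule exI[of _ c])
      apply (intro conjI Cpos c allI impI)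
      subgoal by (rule Gmeas)
      subgoal for n by (rule bound)
      done
    define N where "N = (\<Inter>m. {\<omega> \<in> space ?M. ereal (real (m + 1)) \<le> ?Rd \<omega>})"
    have Nm: "N \<in> sets ?M" unfolding N_def using Gmeas by auto
    have NX: "measure ?M N \<le> C * exp (- c * ln (real m))" if m: "real m \<ge> exp 1" for m :: nat
    proof -
      have "exp 1 \<ge> (2::real)" using exp_ge_add_one_self[of 1] by simp
      then have "real m \<ge> 1" using m by linarith
      then have m1: "m \<ge> 1" by simp
      have "N \<subseteq> {\<omega> \<in> space ?M. ereal (real (m - 1 + 1)) \<le> ?Rd \<omega>}" unfolding N_def by blast
      then have "measure ?M N \<le> measure ?M {\<omega> \<in> space ?M. ereal (real m) \<le> ?Rd \<omega>}"
        using m1 Gmeas by (intro finite_measure_mono) auto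
      also have "\<dots> \<le> C * exp (- c * ln (real m) powr ?p)" by (rule bound[OF m1])
      also have "\<dots> \<le> C * exp (- c * ln (real m))"
      proof -
        have l1: "ln (real m) \<ge> 1" using m m1 by (subst ln_ge_iff) auto
        have "ln (real m) powr 1 \<le> ln (real m) powr ?p" using l1 DS by (intro powr_mono) auto
        then have "ln (real m) \<le> ln (real m) powr ?p" using l1 by simp
        then show ?thesis using c Cpos by (intro mult_left_mono) auto
      qed
      finally show ?thesis .
    qed
    have lim: "(\<lambda>m. C * exp (- c * ln (real m))) \<longlonglongrightarrow> 0"
    proof -
      have "filterlim (\<lambda>m. ln (real m)) at_top sequentially"
        by (rule filterlim_compose[OF ln_at_top filterlim_real_sequentially])
      then have "filterlim (\<lambda>m::nat. - c * ln (real m)) at_bot sequentially"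
        using c by (intro filterlim_tendsto_neg_mult_at_bot[OF tendsto_const]) auto
      then have "(\<lambda>m. exp (- c * ln (real m))) \<longlonglongrightarrow> 0"
        by (rule filterlim_compose[OF exp_at_bot])
      then show ?thesis using tendsto_mult[OF tendsto_const[of C]] by fastforce
    qed
    have "measure ?M N \<le> 0"
    proof (rule LIMSEQ_le_const[OF lim])
      show "\<exists>N0. \<forall>m\<ge>N0. measure ?M N \<le> C * exp (- c * ln (real m))"
      proof (intro exI[of _ "nat \<lceil>exp (1::real)\<rceil>"] allI impI NX)
        fix m :: nat assume m: "nat \<lceil>exp (1::real)\<rceil> \<le> m"
        have "exp 1 \<le> real_of_int \<lceil>exp (1::real)\<rceil>" by (rule le_of_int_ceiling)
        also have "\<dots> = real (nat \<lceil>exp (1::real)\<rceil>)" by simp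
        also have "\<dots> \<le> real m" by (rule of_nat_mono[OF m])
        finally show "exp 1 \<le> real m" .
      qed
    qed
    then have "emeasure ?M N = 0" using emeasure_eq_measure[of N] measure_nonneg[of ?M N] by simp
    then have Nnull: "N \<in> null_sets ?M" using Nm by (intro null_setsI)
    show "AE \<omega> in P u. R_den kd2 chk6 (DeltaS u) (eta P u) \<omega> \<alpha> < \<infinity> \<and>
        (\<forall>R. ereal R \<ge> R_den kd2 chk6 (DeltaS u) (eta P u) \<omega> \<alpha> \<longrightarrow>
           dens_good kd2 chk6 (DeltaS u) (eta P u) \<omega> \<alpha> R)"
    proof (rule AE_I'[OF Nnull], rule subsetI)
      fix \<omega> assume "\<omega> \<in> {\<omega> \<in> space ?M. \<not> (?Rd \<omega> < \<infinity> \<and>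
        (\<forall>R. ereal R \<ge> ?Rd \<omega> \<longrightarrow> dens_good kd2 chk6 (DeltaS u) (eta P u) \<omega> \<alpha> R))}"
      then have \<omega>: "\<omega> \<in> space ?M" and nAB: "\<not> (?Rd \<omega> < \<infinity> \<and>
        (\<forall>R. ereal R \<ge> ?Rd \<omega> \<longrightarrow> dens_good kd2 chk6 (DeltaS u) (eta P u) \<omega> \<alpha> R))" by auto
      have "\<forall>R. ereal R \<ge> ?Rd \<omega> \<longrightarrow> dens_good kd2 chk6 (DeltaS u) (eta P u) \<omega> \<alpha> R"
        using Rden_good[OF less_imp_le[OF kpos], of ?DS] DS by simp
      with nAB have "\<not> ?Rd \<omega> < \<infinity>" by blast
      then have "?Rd \<omega> = \<infinity>" by simp
      then show "\<omega> \<in> N" unfolding N_def using \<omega> by simp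
    qed
  qed
qed

end
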